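(* Let $p$ be an odd prime and $b,c\in\mathbb Z$. For every integer $k$ with $-(p-2)\le k\le p-2$, $$(4c-b^2)\binom{p-2}{k}_{b,c}\equiv\begin{cases}\binom{p-1}{-1}_{b,c}+c\binom{p-1}{1}_{b,c}-b \pmod p & \text{if } k=0,\\[2mm] (k+1)\binom{p-1}{k-1}_{b,c}-(k-1)c\binom{p-1}{k+1}_{b,c}\pmod p & \text{if } 0<|k|\le p-2.\end{cases}$$
   Context: For $n\in\mathbb N$ and $b,c\in\mathbb Z$, the generalized trinomial coefficients $\binom{n}{k}_{b,c}$ ($k\in\mathbb Z$) are the integers defined by the Laurent polynomial identity $\left(x+b+\frac{c}{x}\right)^n=\sum_{k\in\mathbb Z}\binom{n}{k}_{b,c}x^k$; in particular $\binom nk_{b,c}=0$ when $|k|>n$. *)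

theory Defs
  imports "HOL-Computational_Algebra.Formal_Laurent_Series" "HOL-Number_Theory.Cong"
begin

definition gtrinom :: "nat \<Rightarrow> int \<Rightarrow> int \<Rightarrow> int \<Rightarrow> int" where
  "gtrinom n k b c = fls_nth ((fls_X + fls_const b + fls_const c * fls_X_inv) ^ n) k"

end

theory Submission
  imports Defs "HOL-Number_Theory.Residues"
begin


fun tt :: "int \<Rightarrow> int \<Rightarrow> nat \<Rightarrow> int \<Rightarrow> int" where
  "tt b c 0 k = (if k = 0 then 1 else 0)"
| "tt b c (Suc n) k = tt b c n (k-1) + b * tt b c n k + c * tt b c n (k+1)"

lemma gtrinom_tt: "gtrinom n k b c = tt b c n k"
proof (induction n arbitrary: k)
  case 0 then show ?case by (simp add: gtrinom_def)
next
  case (Suc n)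
  define G where "G = (fls_X + fls_const b + fls_const c * fls_X_inv) ^ n"
  have "(fls_X + fls_const b + fls_const c * fls_X_inv) ^ Suc n
        = fls_X * G + fls_const b * G + fls_const c * (fls_X_inv * G)"
    by (simp add: G_def algebra_simps)
  then have "gtrinom (Suc n) k b c = fls_nth G (k-1) + b * fls_nth G k + c * fls_nth G (k+1)"
    by (simp add: gtrinom_def fls_X_times_conv_shift fls_X_inv_times_conv_shift)
  then show ?case using Suc by (simp add: G_def gtrinom_def)
qed

lemma tt_supp: "\<bar>k\<bar> > int n \<Longrightarrow> tt b c n k = 0"
  by (induction n arbitrary: k) auto

lemma tt_top: "tt b c n (int n) = 1"
  by (induction n) (auto simp: tt_supp)

lemma tt_bot: "tt b c n (- int n) = c ^ n"
  by (induction n) (auto simp: tt_supp)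

lemma tt_deriv: "k * tt b c (Suc n) k = int (Suc n) * (tt b c n (k-1) - c * tt b c n (k+1))"
proof (induction n arbitrary: k)
  case 0 then show ?case by (cases "k=1"; cases "k=-1"; cases "k=0"; simp)
next
  case (Suc n)
  have a: "(k-1) * tt b c (Suc n) (k-1) = int (Suc n) * (tt b c n (k-2) - c * tt b c n k)"
    using Suc[of "k-1"] by (simp add: algebra_simps)
  have bb: "k * tt b c (Suc n) k = int (Suc n) * (tt b c n (k-1) - c * tt b c n (k+1))"
    using Suc[of k] .
  have cc: "(k+1) * tt b c (Suc n) (k+1) = int (Suc n) * (tt b c n k - c * tt b c n (k+2))"
    using Suc[of "k+1"] by (simp add: algebra_simps)
  have e1: "tt b c (Suc n) (k-1) = tt b c n (k-2) + b * tt b c n (k-1) + c * tt b c n k"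
    by (simp add: algebra_simps)
  have e2: "tt b c (Suc n) (k+1) = tt b c n k + b * tt b c n (k+1) + c * tt b c n (k+2)"
    by (simp add: algebra_simps)
  have "k * tt b c (Suc (Suc n)) k = k * tt b c (Suc n) (k-1) + b * (k * tt b c (Suc n) k) + c * (k * tt b c (Suc n) (k+1))"
    by (simp add: algebra_simps)
  also have "\<dots> = ((k-1) * tt b c (Suc n) (k-1) + tt b c (Suc n) (k-1)) + b * (k * tt b c (Suc n) k) + c * ((k+1) * tt b c (Suc n) (k+1) - tt b c (Suc n) (k+1))"
    by (simp add: algebra_simps)
  also have "\<dots> = int (Suc (Suc n)) * (tt b c (Suc n) (k-1) - c * tt b c (Suc n) (k+1))"
    apply (simp only: a bb cc)
    apply (simp only: e1 e2)
    by (simp add: algebra_simps)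
  finally show ?case .
qed



lemma key: "(k+1)*tt b c (Suc n) (k-1) - (k-1)*c*tt b c (Suc n) (k+1)
   = int (n+2) * (tt b c n (k-2) - 2*c*tt b c n k + c^2*tt b c n (k+2)) + tt b c (Suc (Suc n)) k + (4*c-b^2)*tt b c n k"
proof -
  have a: "(k-1) * tt b c (Suc n) (k-1) = int (Suc n) * (tt b c n (k-2) - c * tt b c n k)"
    using tt_deriv[of "k-1" b c n] by (simp add: algebra_simps)
  have cc: "(k+1) * tt b c (Suc n) (k+1) = int (Suc n) * (tt b c n k - c * tt b c n (k+2))"
    using tt_deriv[of "k+1" b c n] by (simp add: algebra_simps)
  have e1: "tt b c (Suc n) (k-1) = tt b c n (k-2) + b * tt b c n (k-1) + c * tt b c n k"
    by (simp add: algebra_simps)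
  have e2: "tt b c (Suc n) (k+1) = tt b c n k + b * tt b c n (k+1) + c * tt b c n (k+2)"
    by (simp add: algebra_simps)
  have e3: "tt b c (Suc n) k = tt b c n (k-1) + b * tt b c n k + c * tt b c n (k+1)"
    by simp
  have "(k+1)*tt b c (Suc n) (k-1) - (k-1)*c*tt b c (Suc n) (k+1)
     = ((k-1)*tt b c (Suc n) (k-1) + 2*tt b c (Suc n) (k-1)) - c*((k+1)*tt b c (Suc n) (k+1) - 2*tt b c (Suc n) (k+1))"
    by (simp add: algebra_simps)
  also have "\<dots> = int (n+2) * (tt b c n (k-2) - 2*c*tt b c n k + c^2*tt b c n (k+2)) + tt b c (Suc (Suc n)) k + (4*c-b^2)*tt b c n k"
    apply (simp only: a cc)
    apply (simp only: tt.simps(2)[of b c "Suc n"] e1 e2 e3)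
    by (simp add: algebra_simps power2_eq_square)
  finally show ?thesis .
qed

lemma sum_ext:
  assumes "lo + d \<le> - int n" "int n \<le> hi + d"
  shows "(\<Sum>k\<in>{lo..hi}. tt b c n (k + d)) = (\<Sum>k\<in>{-int n..int n}. tt b c n k)"
proof -
  have "(\<Sum>k\<in>{lo..hi}. tt b c n (k + d)) = (\<Sum>j\<in>{lo+d..hi+d}. tt b c n j)"
    by (rule sum.reindex_bij_witness[of _ "\<lambda>j. j - d" "\<lambda>k. k + d"]) auto
  also have "\<dots> = (\<Sum>k\<in>{-int n..int n}. tt b c n k)"
    by (rule sym, rule sum.mono_neutral_left) (use assms in \<open>auto intro!: tt_supp\<close>)
  finally show ?thesis .
qed

lemma tt_sum: "(\<Sum>k\<in>{-int n..int n}. tt b c n k) = (1+b+c)^n"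
proof (induction n)
  case 0 then show ?case by simp
next
  case (Suc n)
  have "(\<Sum>k\<in>{-int (Suc n)..int (Suc n)}. tt b c (Suc n) k)
     = (\<Sum>k\<in>{-int (Suc n)..int (Suc n)}. tt b c n (k + (-1)))
       + b * (\<Sum>k\<in>{-int (Suc n)..int (Suc n)}. tt b c n (k + 0))
       + c * (\<Sum>k\<in>{-int (Suc n)..int (Suc n)}. tt b c n (k + 1))"
    by (simp add: sum.distrib sum_distrib_left)
  also have "\<dots> = (1+b+c)^n * (1 + b + c)"
    using sum_ext[of "-int (Suc n)" "-1" n "int (Suc n)" b c] sum_ext[of "-int (Suc n)" 0 n "int (Suc n)" b c]
      sum_ext[of "-int (Suc n)" 1 n "int (Suc n)" b c] Suc
    by (simp only:) (simp_all add: algebra_simps)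
  finally show ?case by (simp add: algebra_simps)
qed



lemma fermat_nat: "prime p \<Longrightarrow> [m ^ p = m] (mod p)" for m p :: nat
proof (cases "p dvd m")
  case True
  assume "prime p"
  then have "p > 0" using prime_gt_0_nat by blast
  then have "p dvd m ^ p" using True by (metis dvd_power dvd_trans)
  then show ?thesis using True by (simp add: cong_def dvd_eq_mod_eq_0)
next
  case False
  assume p: "prime p"
  then have "[m ^ (p-1) = 1] (mod p)" using fermat_theorem False by blast
  then have "[m * m ^ (p-1) = m * 1] (mod p)" by (rule cong_scalar_left)
  moreover have "m * m ^ (p-1) = m ^ p" using p prime_gt_0_nat
    by (metis Suc_diff_1 power_Suc)
  ultimately show ?thesis by simp
qed

lemma fermat_int: "prime p \<Longrightarrow> int p dvd (a ^ p - a)" for a :: int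
proof -
  assume p: "prime p"
  define m where "m = nat (a mod int p)"
  have pos: "int p > 0" using p prime_gt_0_nat by simp
  have am: "[a = int m] (mod int p)" using pos by (simp add: m_def cong_def)
  have "[m ^ p = m] (mod p)" using fermat_nat p by blast
  then have "[int m ^ p = int m] (mod int p)"
    by (metis cong_int_iff of_nat_power)
  moreover have "[a ^ p = int m ^ p] (mod int p)" using am by (rule cong_pow)
  ultimately have "[a ^ p = a] (mod int p)"
    using am by (meson cong_sym cong_trans)
  then show ?thesis by (simp add: cong_iff_dvd_diff)
qed



lemma tt_p_nz:
  assumes p: "prime p" and k: "0 < \<bar>k\<bar>" "\<bar>k\<bar> < int p"
  shows "int p dvd tt b c p k"
proof -
  obtain n where pn: "p = Suc n" using p prime_gt_0_nat gr0_conv_Suc by blast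
  have "k * tt b c p k = int p * (tt b c n (k-1) - c * tt b c n (k+1))"
    using tt_deriv[of k b c n] pn by simp
  then have "int p dvd k * tt b c p k" by simp
  moreover have "prime (int p)" using p by simp
  moreover have "\<not> int p dvd k"
  proof
    assume "int p dvd k"
    then have "int p dvd \<bar>k\<bar>" by simp
    then have "int p \<le> \<bar>k\<bar>" using k by (simp add: zdvd_imp_le)
    then show False using k by simp
  qed
  ultimately show ?thesis using prime_dvd_mult_iff by blast
qed

lemma tt_p_0:
  assumes p: "prime p"
  shows "int p dvd tt b c p 0 - b"
proof -
  define A where "A = {-int p..int p}"
  define R where "R = A - {int p} - {-int p} - {0}"
  have fin: "finite A" by (simp add: A_def)
  have p0: "int p > 0" using p prime_gt_0_nat by simp
  have "sum (tt b c p) A = tt b c p (int p) + sum (tt b c p) (A - {int p})"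
    using fin p0 by (simp add: A_def sum.remove)
  also have "sum (tt b c p) (A - {int p}) = tt b c p (-int p) + sum (tt b c p) (A - {int p} - {-int p})"
    using fin p0 by (intro sum.remove) (auto simp: A_def)
  also have "sum (tt b c p) (A - {int p} - {-int p}) = tt b c p 0 + sum (tt b c p) R"
    unfolding R_def using fin p0 by (intro sum.remove) (auto simp: A_def)
  finally have eq: "(1+b+c)^p = 1 + c^p + tt b c p 0 + sum (tt b c p) R"
    using tt_sum[of b c p] tt_top[of b c p] tt_bot[of b c p] by (simp add: A_def)
  have dR: "int p dvd sum (tt b c p) R"
    by (rule dvd_sum) (auto simp: R_def A_def intro!: tt_p_nz[OF p])
  have "tt b c p 0 - b = ((1+b+c)^p - (1+b+c)) - (c^p - c) - sum (tt b c p) R"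
    using eq by simp
  then show ?thesis using dR fermat_int[OF p, of "1+b+c"] fermat_int[OF p, of c]
    by (metis dvd_diff)
qed

theorem lemma2p1:
  fixes p :: nat and b c k :: int
  assumes "prime p" and "odd p"
    and "- (int p - 2) \<le> k" and "k \<le> int p - 2"
  shows "(k = 0 \<longrightarrow>
           [(4 * c - b ^ 2) * gtrinom (p - 2) k b c
              = gtrinom (p - 1) (-1) b c + c * gtrinom (p - 1) 1 b c - b] (mod int p))
       \<and> (0 < \<bar>k\<bar> \<and> \<bar>k\<bar> \<le> int p - 2 \<longrightarrow>
           [(4 * c - b ^ 2) * gtrinom (p - 2) k b c
              = (k + 1) * gtrinom (p - 1) (k - 1) b c - (k - 1) * c * gtrinom (p - 1) (k + 1) b c] (mod int p))"
proof -
  have p2: "p \<ge> 2" using assms(1) prime_ge_2_nat by blast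
  then have "p \<noteq> 2" using assms(2) by auto
  with p2 have p3: "p \<ge> 3" by simp
  obtain n where pn: "p = Suc (Suc n)" using p2 by (metis add_2_eq_Suc le_add_diff_inverse2 add.commute)
  have g1: "p - 1 = Suc n" "p - 2 = n" using pn by auto
  define X where "X = tt b c n (k-2) - 2*c*tt b c n k + c^2*tt b c n (k+2)"
  have K: "(k+1)*tt b c (Suc n) (k-1) - (k-1)*c*tt b c (Suc n) (k+1)
     = int p * X + tt b c p k + (4*c-b^2)*tt b c n k"
    using key[of k b c n] pn by (simp add: X_def)
  show ?thesis
  proof (intro conjI impI)
    assume k0: "k = 0"
    have "tt b c (Suc n) (-1) + c * tt b c (Suc n) 1 - b
       = int p * X + (tt b c p 0 - b) + (4*c-b^2)*tt b c n 0"
      using K k0 by simp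
    moreover have "int p dvd int p * X + (tt b c p 0 - b)"
      using tt_p_0[OF assms(1)] by simp
    ultimately show "[(4 * c - b ^ 2) * gtrinom (p - 2) k b c
              = gtrinom (p - 1) (-1) b c + c * gtrinom (p - 1) 1 b c - b] (mod int p)"
      unfolding g1 gtrinom_tt k0 cong_iff_dvd_diff
      by (metis add_diff_cancel_right' diff_diff_eq2 dvd_minus_iff minus_diff_eq)
  next
    assume kk: "0 < \<bar>k\<bar> \<and> \<bar>k\<bar> \<le> int p - 2"
    have "int p dvd tt b c p k" using tt_p_nz[OF assms(1)] kk by simp
    then have "int p dvd int p * X + tt b c p k" by simp
    then show "[(4 * c - b ^ 2) * gtrinom (p - 2) k b c
              = (k + 1) * gtrinom (p - 1) (k - 1) b c - (k - 1) * c * gtrinom (p - 1) (k + 1) b c] (mod int p)"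
      unfolding g1 gtrinom_tt cong_iff_dvd_diff K
      by (metis add_diff_cancel_right' diff_diff_eq2 dvd_minus_iff minus_diff_eq)
  qed
qed

end
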